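(* Let $p(\mathbf x)=W_2\rho_{r_1}(W_1\mathbf x)$ be a two-layer hPNN with architecture $((d_0,d_1,d_2),(r_1))$, $d_0,d_1\ge 2$, $d_2\ge 1$, $r_1\ge 3$, such that $\operatorname{krank}(W_2)\ge 1$, $\operatorname{krank}(W_1^T)\ge 2$ and $$r_1\ \ge\ 2\left\lceil\frac{2d_1-\operatorname{krank}(W_1^T)}{2\operatorname{krank}(W_1^T)-2}\right\rceil+1.$$ Then the representation $(W_1,W_2)$ of $p$ is unique.
   Context: Work over $\mathbb R$. $\rho_r(z_1,\dots,z_d)=(z_1^r,\dots,z_d^r)$. A two-layer hPNN with architecture $((d_0,d_1,d_2),(r_1))$ and weights $(W_1,W_2)$, $W_1\in\mathbb R^{d_1\times d_0}$, $W_2\in\mathbb R^{d_2\times d_1}$, is the map $\mathbf x\mapsto W_2\rho_{r_1}(W_1\mathbf x)$. Weights $(W_1',W_2')$ are equivalent to $(W_1,W_2)$ if $W_1'=PDW_1$ and $W_2'=W_2D^{-r_1}P^T$ for some permutation matrix $P$ and invertible diagonal matrix $D$. The representation is unique if every weight pair of the same architecture defining the same function is equivalent to it. The Kruskal rank $\operatorname{krank}(A)$ of a matrix $A$ is the largest integer $k$ such that every set of $k$ columns of $A$ is linearly independent. *)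

theory Defs
  imports "HOL-Analysis.Analysis"
begin

definition rho :: "nat \<Rightarrow> real^'d \<Rightarrow> real^'d" where
  "rho r z = (\<chi> i. (z $ i) ^ r)"

text \<open>Two-layer hPNN with architecture ((d0,d1,d2),(r1)); the widths are the
  cardinalities of the index types 'd0, 'd1, 'd2.\<close>
definition hpnn2 :: "nat \<Rightarrow> real^'d0^'d1 \<Rightarrow> real^'d1^'d2 \<Rightarrow> real^'d0 \<Rightarrow> real^'d2" where
  "hpnn2 r W1 W2 = (\<lambda>x. W2 *v rho r (W1 *v x))"

definition permutation_matrix :: "real^'n^'n \<Rightarrow> bool" where
  "permutation_matrix P \<longleftrightarrow> (\<exists>\<sigma>. \<sigma> permutes (UNIV :: 'n set) \<and> P = (\<chi> i j. if j = \<sigma> i then 1 else 0))"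

definition diag_mat :: "('n \<Rightarrow> real) \<Rightarrow> real^'n^'n" where
  "diag_mat d = (\<chi> i j. if i = j then d i else 0)"

definition hpnn2_equiv :: "nat \<Rightarrow> real^'d0^'d1 \<Rightarrow> real^'d1^'d2 \<Rightarrow> real^'d0^'d1 \<Rightarrow> real^'d1^'d2 \<Rightarrow> bool" where
  "hpnn2_equiv r W1 W2 W1' W2' \<longleftrightarrow>
     (\<exists>P d. permutation_matrix P \<and> (\<forall>i. d i \<noteq> 0) \<and>
        W1' = P ** diag_mat d ** W1 \<and>
        W2' = W2 ** diag_mat (\<lambda>i. (inverse (d i)) ^ r) ** transpose P)"

definition hpnn2_unique :: "nat \<Rightarrow> real^'d0^'d1 \<Rightarrow> real^'d1^'d2 \<Rightarrow> bool" where
  "hpnn2_unique r W1 W2 \<longleftrightarrow>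
     (\<forall>(W1' :: real^'d0^'d1) (W2' :: real^'d1^'d2).
        hpnn2 r W1' W2' = hpnn2 r W1 W2 \<longrightarrow> hpnn2_equiv r W1 W2 W1' W2')"

definition cols_indep :: "real^'n^'m \<Rightarrow> 'n set \<Rightarrow> bool" where
  "cols_indep A S \<longleftrightarrow> (\<forall>c. (\<Sum>j\<in>S. c j *s column j A) = 0 \<longrightarrow> (\<forall>j\<in>S. c j = 0))"

definition krank :: "real^'n^'m \<Rightarrow> nat" where
  "krank A = Max {k. k \<le> CARD('n) \<and> (\<forall>S :: 'n set. card S = k \<longrightarrow> cols_indep A S)}"

end

theory Submission
  imports Defs
begin

lemma rank_nullity_sub:
  fixes f :: "'a::euclidean_space \<Rightarrow> 'b::euclidean_space"
  assumes lf: "linear f" and G: "subspace G"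
  shows "dim G = dim (f ` G) + dim (G \<inter> {x. f x = 0})"
proof -
  define N where "N = G \<inter> {x. f x = 0}"
  define M where "M = {y \<in> G. \<forall>x\<in>N. orthogonal x y}"
  have subN: "subspace N" unfolding N_def
    using G lf by (auto simp: subspace_def linear_add linear_0 linear_cmul)
  have "dim M + dim N = dim G" unfolding M_def
    using dim_subspace_orthogonal_to_vectors[OF subN G] N_def by auto
  moreover have subM: "subspace M"
    unfolding M_def subspace_def using G
    by (auto simp: subspace_def orthogonal_clauses)
  have fMG: "f ` M = f ` G"
  proof
    show "f ` M \<subseteq> f ` G" unfolding M_def by auto
    show "f ` G \<subseteq> f ` M"
    proof
      fix w assume "w \<in> f ` G"
      then obtain g where g: "g \<in> G" "w = f g" by auto
      obtain y z where yz: "y \<in> span N" "\<And>x. x \<in> span N \<Longrightarrow> orthogonal z x" "g = y + z"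
        using orthogonal_subspace_decomp_exists[of N g] by metis
      have yN: "y \<in> N" using yz(1) subN by (metis span_eq_iff)
      then have "y \<in> G" "f y = 0" unfolding N_def by auto
      then have zG: "z \<in> G" using g yz(3) G
        by (metis add_diff_cancel_left' subspace_diff)
      have "z \<in> M" unfolding M_def using zG yz(2) span_base orthogonal_commute by blast
      moreover have "f g = f z" using yz(3) \<open>f y = 0\<close> linear_add[OF lf] by simp
      ultimately show "w \<in> f ` M" using g by auto
    qed
  qed
  have "inj_on f (span M)"
  proof -
    have "span M = M" using subM by (metis span_eq_iff)
    moreover have "inj_on f M"
    proof (rule inj_onI)
      fix a b assume ab: "a \<in> M" "b \<in> M" "f a = f b"
      have "a - b \<in> M" using subM ab by (simp add: subspace_diff)
      moreover have "f (a - b) = 0" using ab linear_diff[OF lf] by simp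
      ultimately have "a - b \<in> N" "orthogonal (a - b) (a - b)" unfolding M_def N_def by auto
      then show "a = b" by (simp add: orthogonal_def)
    qed
    ultimately show ?thesis by metis
  qed
  then have "dim (f ` M) = dim M" using dim_image_eq[OF lf] by blast
  ultimately show ?thesis using fMG N_def by simp
qed

definition RS :: "'i::finite set \<Rightarrow> (real^'i) set" where
  "RS T = {x. \<forall>i. i \<notin> T \<longrightarrow> x$i = 0}"

lemma dim_RS: "dim (RS T) = card T"
  unfolding RS_def dim_vec_eq[symmetric] by (rule dim_substandard_cart)

lemma subspace_RS: "subspace (RS T)"
  unfolding RS_def subspace_def by auto

lemma sum_UNIV_restrict:
  fixes f :: "'i::finite \<Rightarrow> real"
  assumes "\<And>i. i \<notin> T \<Longrightarrow> f i = 0"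
  shows "(\<Sum>i\<in>UNIV. f i) = (\<Sum>i\<in>T. f i)"
  using assms by (intro sum.mono_neutral_right) auto

lemma rank_ineq:
  fixes al al' :: "'i::finite \<Rightarrow> 'x \<Rightarrow> real" and be be' :: "'i \<Rightarrow> 'y \<Rightarrow> real"
    and d d' :: "'i \<Rightarrow> real"
  assumes eq: "\<And>X Y. (\<Sum>i\<in>UNIV. d i * al i X * be i Y) = (\<Sum>i\<in>UNIV. d' i * al' i X * be' i Y)"
    and SA: "SA \<subseteq> {i. d i \<noteq> 0}" "\<And>c. (\<forall>X. (\<Sum>i\<in>SA. c i * al i X) = 0) \<Longrightarrow> \<forall>i\<in>SA. c i = 0"
    and SB: "SB \<subseteq> {i. d i \<noteq> 0}" "\<And>c. (\<forall>Y. (\<Sum>i\<in>SB. c i * be i Y) = 0) \<Longrightarrow> \<forall>i\<in>SB. c i = 0"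
  shows "card SA + card SB \<le> card {i. d i \<noteq> 0} + card {i. d' i \<noteq> 0}"
proof -
  define S where "S = {i. d i \<noteq> 0}"
  define S' where "S' = {i. d' i \<noteq> 0}"
  define Phi where "Phi = (\<lambda>(c::real^'i) X. \<Sum>i\<in>UNIV. c$i * al i X)"
  define Phi' where "Phi' = (\<lambda>(c::real^'i) X. \<Sum>i\<in>UNIV. c$i * al' i X)"
  define bY where "bY = (\<lambda>Y. (\<chi> i. d i * be i Y) :: real^'i)"
  define bY' where "bY' = (\<lambda>Y. (\<chi> i. d' i * be' i Y) :: real^'i)"
  define G where "G = span (range (\<lambda>Y. (bY Y, bY' Y)))"
  define K where "K = {c. \<forall>X. Phi c X = 0}"
  have Phi_add: "Phi (x + y) X = Phi x X + Phi y X" for x y X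
    unfolding Phi_def by (simp add: distrib_right sum.distrib)
  have Phi_scale: "Phi (a *\<^sub>R x) X = a * Phi x X" for a x X
    unfolding Phi_def by (simp add: sum_distrib_left mult.assoc)
  have Phi'_add: "Phi' (x + y) X = Phi' x X + Phi' y X" for x y X
    unfolding Phi'_def by (simp add: distrib_right sum.distrib)
  have Phi'_scale: "Phi' (a *\<^sub>R x) X = a * Phi' x X" for a x X
    unfolding Phi'_def by (simp add: sum_distrib_left mult.assoc)
  have subG: "subspace G" unfolding G_def by simp
  have subK: "subspace K" unfolding K_def subspace_def
  proof (intro conjI ballI allI)
    show "0 \<in> {c. \<forall>X. Phi c X = 0}" by (simp add: Phi_def)
  qed (simp_all add: Phi_add Phi_scale)
  define Inv where "Inv = {g. (\<forall>X. Phi (fst g) X = Phi' (snd g) X) \<and> fst g \<in> RS S \<and> snd g \<in> RS S'}"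
  have gen: "(bY Y, bY' Y) \<in> Inv" for Y
  proof -
    have "Phi (bY Y) X = Phi' (bY' Y) X" for X
    proof -
      have "Phi (bY Y) X = (\<Sum>i\<in>UNIV. d i * al i X * be i Y)"
        unfolding Phi_def bY_def by (intro sum.cong) (simp_all add: mult_ac)
      also have "\<dots> = (\<Sum>i\<in>UNIV. d' i * al' i X * be' i Y)" by (rule eq)
      also have "\<dots> = Phi' (bY' Y) X"
        unfolding Phi'_def bY'_def by (intro sum.cong) (simp_all add: mult_ac)
      finally show ?thesis .
    qed
    moreover have "bY Y \<in> RS S" unfolding bY_def RS_def S_def by simp
    moreover have "bY' Y \<in> RS S'" unfolding bY'_def RS_def S'_def by simp
    ultimately show ?thesis unfolding Inv_def by simp
  qed
  have subInv: "subspace Inv"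
    unfolding subspace_def
  proof (intro conjI ballI allI)
    show "0 \<in> Inv" unfolding Inv_def RS_def Phi_def Phi'_def by simp
    fix x y assume x: "x \<in> Inv" and y: "y \<in> Inv"
    show "x + y \<in> Inv" using x y unfolding Inv_def RS_def by (simp add: Phi_add Phi'_add)
  next
    fix c x assume x: "x \<in> Inv"
    show "c *\<^sub>R x \<in> Inv" using x unfolding Inv_def RS_def by (simp add: Phi_scale Phi'_scale)
  qed
  have inv: "G \<subseteq> Inv"
    unfolding G_def by (rule span_minimal) (use gen subInv in auto)
  have fstG: "fst ` G = span (range bY)"
  proof -
    have "fst ` G = span (fst ` range (\<lambda>Y. (bY Y, bY' Y)))"
      unfolding G_def by (simp add: linear_span_image linear_fst)
    also have "fst ` range (\<lambda>Y. (bY Y, bY' Y)) = range bY" by (simp add: image_image)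
    finally show ?thesis .
  qed
  have one: "card SB \<le> dim (fst ` G)"
  proof -
    define E where "E = (\<lambda>i. axis i (1::real)) ` (- SB)"
    have spanU: "span (range bY \<union> E) = UNIV"
    proof (rule ccontr)
      assume "span (range bY \<union> E) \<noteq> UNIV"
      then have "span (range bY \<union> E) \<subset> span UNIV" by auto
      then obtain x :: "real^'i" where x: "x \<noteq> 0" "\<And>y. y \<in> span (range bY \<union> E) \<Longrightarrow> orthogonal x y"
        using orthogonal_to_subspace_exists_gen by metis
      have x1: "x$i = 0" if "i \<notin> SB" for i
      proof -
        have "axis i 1 \<in> span (range bY \<union> E)" using that unfolding E_def by (intro span_base) auto
        then have "x \<bullet> axis i 1 = 0" using x(2) by (simp add: orthogonal_def)
        then show ?thesis by (simp add: inner_axis)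
      qed
      have "\<forall>Y. (\<Sum>i\<in>SB. (x$i * d i) * be i Y) = 0"
      proof
        fix Y
        have "bY Y \<in> span (range bY \<union> E)" by (intro span_base) auto
        then have "x \<bullet> bY Y = 0" using x(2) by (simp add: orthogonal_def)
        then have "(\<Sum>i\<in>UNIV. x$i * (d i * be i Y)) = 0" unfolding bY_def by (simp add: inner_vec_def)
        moreover have "(\<Sum>i\<in>UNIV. x$i * (d i * be i Y)) = (\<Sum>i\<in>SB. (x$i * d i) * be i Y)"
          by (subst sum_UNIV_restrict[of SB]) (auto simp: x1 ac_simps)
        ultimately show "(\<Sum>i\<in>SB. (x$i * d i) * be i Y) = 0" by simp
      qed
      then have "\<forall>i\<in>SB. x$i * d i = 0" using SB(2)[of "\<lambda>i. x$i * d i"] by simp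
      then have "\<forall>i\<in>SB. x$i = 0" using SB(1) by auto
      then have "x = 0" using x1 by (auto simp: vec_eq_iff)
      then show False using x(1) by simp
    qed
    have "CARD('i) = dim (span (range bY \<union> E))"
      using spanU dim_RS[of UNIV] by (simp add: RS_def)
    also have "\<dots> \<le> dim (range bY) + dim E"
    proof -
      have "dim (span (range bY \<union> E)) = dim {x + y |x y. x \<in> span (range bY) \<and> y \<in> span E}"
        by (simp add: span_Un)
      also have "\<dots> \<le> dim (span (range bY)) + dim (span E)"
        using dim_sums_Int[of "span (range bY)" "span E"] by simp
      finally show ?thesis by simp
    qed
    also have "dim E \<le> card (- SB)"
    proof -
      have "finite E" unfolding E_def by simp
      then have "dim E \<le> card E" using dim_le_card[of E E] span_superset[of E] by simp
      also have "card E \<le> card (- SB)" unfolding E_def by (rule card_image_le) simp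
      finally show ?thesis .
    qed
    also have "card (- SB) = CARD('i) - card SB" using card_Diff_subset[of SB UNIV] by (simp add: Compl_eq_Diff_UNIV)
    finally have "card SB \<le> dim (range bY)"
      using card_mono[of UNIV SB] by simp
    then show ?thesis using fstG by simp
  qed
  have two: "dim (fst ` G) \<le> dim G" by (rule dim_image_le[OF linear_fst])
  have three: "dim G = dim (snd ` G) + dim (G \<inter> {x. snd x = 0})"
    by (rule rank_nullity_sub[OF linear_snd subG])
  have four: "dim (snd ` G) \<le> card S'"
  proof -
    have "snd ` G \<subseteq> RS S'" using inv unfolding Inv_def by auto
    then show ?thesis using dim_subset dim_RS by metis
  qed
  define Z where "Z = G \<inter> {x. snd x = 0}"
  have five: "dim Z \<le> dim (K \<inter> RS S)"
  proof -
    have lin: "linear (\<lambda>w::real^'i. (w, 0::real^'i))"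
      by (simp add: linear_iff)
    have "Z = (\<lambda>w. (w, 0)) ` (fst ` Z)" unfolding Z_def by force
    then have "dim Z \<le> dim (fst ` Z)" using dim_image_le[OF lin, of "fst ` Z"] by simp
    moreover have "fst ` Z \<subseteq> K \<inter> RS S"
    proof
      fix w assume "w \<in> fst ` Z"
      then obtain g where g: "g \<in> G" "snd g = 0" "w = fst g" unfolding Z_def by auto
      then have "\<forall>X. Phi w X = Phi' 0 X" "w \<in> RS S" using inv unfolding Inv_def by auto
      then show "w \<in> K \<inter> RS S" unfolding K_def by (simp add: Phi'_def)
    qed
    ultimately show ?thesis using dim_subset order_trans by metis
  qed
  have six: "dim (K \<inter> RS S) + card SA \<le> card S"
  proof -
    have sub1: "subspace (K \<inter> RS S)" using subK subspace_RS[of S] by (auto simp: subspace_def)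
    have int0: "(K \<inter> RS S) \<inter> RS SA = {0}"
    proof
      show "(K \<inter> RS S) \<inter> RS SA \<subseteq> {0}"
      proof
        fix x assume x: "x \<in> (K \<inter> RS S) \<inter> RS SA"
        have "\<forall>X. (\<Sum>i\<in>SA. x$i * al i X) = 0"
        proof
          fix X
          have "Phi x X = 0" using x unfolding K_def by auto
          moreover have "Phi x X = (\<Sum>i\<in>SA. x$i * al i X)" unfolding Phi_def
            using x by (subst sum_UNIV_restrict[of SA]) (auto simp: RS_def)
          ultimately show "(\<Sum>i\<in>SA. x$i * al i X) = 0" by simp
        qed
        then have "\<forall>i\<in>SA. x$i = 0" by (rule SA(2))
        then have "x = 0" using x by (auto simp: vec_eq_iff RS_def)
        then show "x \<in> {0}" by simp
      qed
      show "{0} \<subseteq> (K \<inter> RS S) \<inter> RS SA" using subspace_0[OF sub1] subspace_0[OF subspace_RS[of SA]] by blast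
    qed
    have "dim {x + y |x y. x \<in> K \<inter> RS S \<and> y \<in> RS SA} + dim ((K \<inter> RS S) \<inter> RS SA)
          = dim (K \<inter> RS S) + dim (RS SA)"
      by (rule dim_sums_Int[OF sub1 subspace_RS])
    moreover have "{x + y |x y. x \<in> K \<inter> RS S \<and> y \<in> RS SA} \<subseteq> RS S"
    proof
      fix z assume "z \<in> {x + y |x y. x \<in> K \<inter> RS S \<and> y \<in> RS SA}"
      then obtain x y where xy: "z = x + y" "x \<in> RS S" "y \<in> RS SA" by blast
      have "SA \<subseteq> S" using SA(1) S_def by simp
      then show "z \<in> RS S" using xy unfolding RS_def by auto
    qed
    then have "dim {x + y |x y. x \<in> K \<inter> RS S \<and> y \<in> RS SA} \<le> card S"
      using dim_subset dim_RS[of S] by (metis (no_types, lifting))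
    ultimately show ?thesis using int0 dim_RS[of SA] by (simp only: dim_singleton) simp
  qed
  have three': "dim G = dim (snd ` G) + dim Z" using three unfolding Z_def .
  have "card SA + card SB \<le> card S + card S'"
    using one two three' four five six by linarith
  then show ?thesis unfolding S_def S'_def .
qed

definition KH :: "('i::finite \<Rightarrow> real^'d) \<Rightarrow> nat \<Rightarrow> bool" where
  "KH u k \<longleftrightarrow> (\<forall>T c. card T \<le> k \<longrightarrow> (\<Sum>j\<in>T. c j *\<^sub>R u j) = 0 \<longrightarrow> (\<forall>j\<in>T. c j = 0))"

lemma KH_D:
  assumes "KH u k" "card T \<le> k" "(\<Sum>j\<in>T. c j *\<^sub>R u j) = 0" "j \<in> T"
  shows "c j = 0"
  using assms unfolding KH_def by blast

lemma KH_inj: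
  assumes KH: "KH u k" and k2: "2 \<le> k"
  shows "inj u"
proof (rule injI)
  fix i j assume eq: "u i = u j"
  show "i = j"
  proof (rule ccontr)
    assume ne: "i \<noteq> j"
    define c where "c = (\<lambda>x. if x = i then (1::real) else -1)"
    have "(\<Sum>x\<in>{i,j}. c x *\<^sub>R u x) = 0" using ne eq unfolding c_def by simp
    moreover have "card {i,j} \<le> k" using ne k2 by simp
    ultimately have "c i = 0" using KH_D[OF KH] by blast
    then show False unfolding c_def by simp
  qed
qed

lemma KH_nonzero:
  assumes KH: "KH u k" and k1: "1 \<le> k"
  shows "u i \<noteq> 0"
proof
  assume "u i = 0"
  then have "(\<Sum>x\<in>{i}. (1::real) *\<^sub>R u x) = 0" by simp
  moreover have "card {i} \<le> k" using k1 by simp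
  ultimately show False using KH_D[OF KH, of "{i}" "\<lambda>_. 1" i] by simp
qed

lemma KH_indep:
  assumes KH: "KH u k" and k2: "2 \<le> k" and T: "card T \<le> k"
  shows "independent (u ` T)"
proof -
  have inj: "inj u" by (rule KH_inj[OF KH k2])
  have "finite (u ` T)" by simp
  moreover have "\<forall>c. (\<Sum>v\<in>u ` T. c v *\<^sub>R v) = 0 \<longrightarrow> (\<forall>v\<in>u ` T. c v = 0)"
  proof (intro allI impI ballI)
    fix c v assume s: "(\<Sum>v\<in>u ` T. c v *\<^sub>R v) = 0" and v: "v \<in> u ` T"
    have "(\<Sum>v\<in>u ` T. c v *\<^sub>R v) = (\<Sum>j\<in>T. c (u j) *\<^sub>R u j)"
      using inj by (simp add: sum.reindex inj_on_def)
    then have "(\<Sum>j\<in>T. c (u j) *\<^sub>R u j) = 0" using s by simp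
    then show "c v = 0" using v KH_D[OF KH T, of "\<lambda>j. c (u j)"] by auto
  qed
  ultimately show ?thesis using independent_explicit by blast
qed

lemma KH_notin_span:
  assumes KH: "KH u k" and k2: "2 \<le> k" and G: "card G + 1 \<le> k" "i0 \<notin> G"
  shows "u i0 \<notin> span (u ` G)"
proof
  assume "u i0 \<in> span (u ` G)"
  then obtain c where c: "u i0 = (\<Sum>w\<in>u ` G. c w *\<^sub>R w)"
    using span_finite[of "u ` G"] by auto
  have inj: "inj u" by (rule KH_inj[OF KH k2])
  have c2: "u i0 = (\<Sum>j\<in>G. c (u j) *\<^sub>R u j)"
    using c inj by (simp add: sum.reindex inj_on_def)
  define c' where "c' = (\<lambda>j. if j = i0 then (-1::real) else c (u j))"
  have "(\<Sum>j\<in>insert i0 G. c' j *\<^sub>R u j) = - u i0 + (\<Sum>j\<in>G. c' j *\<^sub>R u j)"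
    using G(2) unfolding c'_def by simp
  also have "(\<Sum>j\<in>G. c' j *\<^sub>R u j) = (\<Sum>j\<in>G. c (u j) *\<^sub>R u j)"
    using G(2) unfolding c'_def by (intro sum.cong) auto
  finally have "(\<Sum>j\<in>insert i0 G. c' j *\<^sub>R u j) = 0" using c2 by simp
  moreover have "card (insert i0 G) \<le> k" using G by simp
  ultimately have "c' i0 = 0" using KH_D[OF KH] by blast
  then show False unfolding c'_def by simp
qed

lemma sep_vector:
  fixes w :: "real^'d"
  assumes "w \<notin> span A"
  obtains z where "\<And>x. x \<in> span A \<Longrightarrow> x \<bullet> z = 0" "w \<bullet> z \<noteq> 0"
proof -
  obtain y z where yz: "y \<in> span A" "\<And>x. x \<in> span A \<Longrightarrow> orthogonal z x" "w = y + z"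
    using orthogonal_subspace_decomp_exists[of A w] by metis
  have "z \<noteq> 0" using yz assms by auto
  have "w \<bullet> z = z \<bullet> z"
    using yz(2)[OF yz(1)] yz(3) by (simp add: inner_add_left inner_add_right orthogonal_def inner_commute)
  then have "w \<bullet> z \<noteq> 0" using \<open>z \<noteq> 0\<close> by simp
  moreover have "x \<bullet> z = 0" if "x \<in> span A" for x
    using yz(2)[OF that] by (simp add: orthogonal_def inner_commute)
  ultimately show ?thesis using that by blast
qed

lemma sep_prod:
  assumes KH: "KH u k" and k2: "2 \<le> k"
  shows "i0 \<notin> T \<Longrightarrow> card T \<le> m * (k - 1) \<Longrightarrow> finite T \<Longrightarrow>
    \<exists>X. (\<forall>i\<in>T. (\<Prod>l<m. u i \<bullet> X l) = 0) \<and> (\<Prod>l<m. u i0 \<bullet> X l) \<noteq> 0"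
proof (induction m arbitrary: T)
  case 0
  then show ?case by auto
next
  case (Suc m)
  define g where "g = min (card T) (k - 1)"
  obtain G where G: "G \<subseteq> T" "card G = g"
    using obtain_subset_with_card_n[of g T] unfolding g_def by auto
  have fG: "finite G" using G Suc.prems finite_subset by auto
  have "card (T - G) = card T - card G" using G fG by (simp add: card_Diff_subset)
  moreover have "card T \<le> (k - 1) + m * (k - 1)" using Suc.prems by simp
  ultimately have "card (T - G) \<le> m * (k - 1)" using G unfolding g_def by (auto simp: min_def)
  then obtain X where X: "\<forall>i\<in>T - G. (\<Prod>l<m. u i \<bullet> X l) = 0" "(\<Prod>l<m. u i0 \<bullet> X l) \<noteq> 0"
    using Suc.IH[of "T - G"] Suc.prems by auto
  have "card G + 1 \<le> k" using G k2 unfolding g_def by linarith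
  moreover have "i0 \<notin> G" using G Suc.prems by auto
  ultimately have "u i0 \<notin> span (u ` G)"
    using KH_notin_span[OF KH k2, of G i0] by blast
  then obtain z where z: "\<And>x. x \<in> span (u ` G) \<Longrightarrow> x \<bullet> z = 0" "u i0 \<bullet> z \<noteq> 0"
    using sep_vector by metis
  define X' where "X' = X(m := z)"
  have pr: "(\<Prod>l<Suc m. u i \<bullet> X' l) = (\<Prod>l<m. u i \<bullet> X l) * (u i \<bullet> z)" for i
    unfolding X'_def by (simp add: prod.lessThan_Suc)
  have "\<forall>i\<in>T. (\<Prod>l<Suc m. u i \<bullet> X' l) = 0"
  proof
    fix i assume i: "i \<in> T"
    show "(\<Prod>l<Suc m. u i \<bullet> X' l) = 0"
    proof (cases "i \<in> G")
      case True
      then have "u i \<bullet> z = 0" using z(1) span_base by blast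
      then show ?thesis using pr by simp
    next
      case False
      then show ?thesis using pr X(1) i by simp
    qed
  qed
  moreover have "(\<Prod>l<Suc m. u i0 \<bullet> X' l) \<noteq> 0" using pr X(2) z(2) by simp
  ultimately show ?case by blast
qed

lemma prod_indep:
  assumes KH: "KH u k" and k2: "2 \<le> k" and T: "card T \<le> m * (k - 1) + 1"
    and c: "\<forall>X. (\<Sum>i\<in>T. c i * (\<Prod>l<m. u i \<bullet> X l)) = 0"
  shows "\<forall>i\<in>T. c i = 0"
proof
  fix i0 assume i0: "i0 \<in> T"
  have "card (T - {i0}) \<le> m * (k - 1)" using T i0 by (simp add: card_Diff_singleton)
  then obtain X where X: "\<forall>i\<in>T - {i0}. (\<Prod>l<m. u i \<bullet> X l) = 0" "(\<Prod>l<m. u i0 \<bullet> X l) \<noteq> 0"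
    using sep_prod[OF KH k2, of i0 "T - {i0}" m] by auto
  have z: "(\<Sum>i\<in>T - {i0}. c i * (\<Prod>l<m. u i \<bullet> X l)) = 0"
    by (intro sum.neutral ballI) (metis X(1) mult_zero_right)
  have "(\<Sum>i\<in>T. c i * (\<Prod>l<m. u i \<bullet> X l)) = c i0 * (\<Prod>l<m. u i0 \<bullet> X l)"
    using i0 z by (subst sum.remove[of T i0]) auto
  then show "c i0 = 0" using c X(2) by simp
qed

lemma generic_y:
  fixes L F :: "(real^'d) set"
  assumes L: "subspace L" and F: "finite F" "\<forall>w\<in>F. w \<notin> L"
  shows "\<exists>y. (\<forall>x\<in>L. x \<bullet> y = 0) \<and> (\<forall>w\<in>F. w \<bullet> y \<noteq> 0)"
  using F
proof (induction F rule: finite_induct)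
  case empty
  show ?case by (rule exI[of _ 0]) simp
next
  case (insert w F)
  then obtain y where y: "\<forall>x\<in>L. x \<bullet> y = 0" "\<forall>w\<in>F. w \<bullet> y \<noteq> 0" by auto
  have "w \<notin> span L" using insert.prems L by (metis insert_iff span_eq_iff)
  then obtain z where z: "\<And>x. x \<in> span L \<Longrightarrow> x \<bullet> z = 0" "w \<bullet> z \<noteq> 0"
    using sep_vector by metis
  define B where "B = (\<lambda>w'. - (w' \<bullet> y) / (w' \<bullet> z)) ` (insert w F)"
  have "finite B" unfolding B_def using insert.hyps by simp
  then obtain t :: real where t: "t \<notin> B" using ex_new_if_finite[OF infinite_UNIV_char_0] by blast
  define y' where "y' = y + t *\<^sub>R z"
  have "\<forall>x\<in>L. x \<bullet> y' = 0"
    using y(1) z(1) span_base unfolding y'_def by (fastforce simp: inner_add_right)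
  moreover have "\<forall>w'\<in>insert w F. w' \<bullet> y' \<noteq> 0"
  proof
    fix w' assume w': "w' \<in> insert w F"
    have e: "w' \<bullet> y' = w' \<bullet> y + t * (w' \<bullet> z)" unfolding y'_def by (simp add: inner_add_right)
    show "w' \<bullet> y' \<noteq> 0"
    proof (cases "w' \<bullet> z = 0")
      case True
      then have "w' \<in> F" using w' z(2) by auto
      then show ?thesis using e True y(2) by simp
    next
      case False
      show ?thesis
      proof
        assume "w' \<bullet> y' = 0"
        then have "t = - (w' \<bullet> y) / (w' \<bullet> z)" using e False by (simp add: field_simps)
        then have "t \<in> B" unfolding B_def using w' by blast
        then show False using t by simp
      qed
    qed
  qed
  ultimately show ?case by blast
qed

definition Lev :: "('i::finite \<Rightarrow> real^'d) \<Rightarrow> ('i \<Rightarrow> real^'d) \<Rightarrow> nat \<Rightarrow> bool" where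
  "Lev u v m \<longleftrightarrow> (\<forall>T. card T = m \<longrightarrow> dim (span (v ` T)) = m \<and>
      card {i. u i \<in> span (v ` T)} = m \<and> {j. v j \<in> span (v ` T)} = T)"

lemma NU_bound:
  fixes u :: "'i::finite \<Rightarrow> real^'d"
  assumes KH: "KH u k" and k2: "2 \<le> k" and dA: "dim A < k"
  shows "card {i. u i \<in> span A} \<le> dim A"
proof (rule ccontr)
  assume "\<not> ?thesis"
  then obtain T where T: "T \<subseteq> {i. u i \<in> span A}" "card T = dim A + 1"
    using obtain_subset_with_card_n[of "dim A + 1" "{i. u i \<in> span A}"] by auto
  have ind: "independent (u ` T)" using KH_indep[OF KH k2] T dA by simp
  have "card (u ` T) \<le> dim (span A)"
    using independent_card_le_dim[OF _ ind, of "span A"] T by auto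
  moreover have "card (u ` T) = card T"
    using KH_inj[OF KH k2] by (simp add: card_image inj_on_def inj_def)
  ultimately show False using T by simp
qed

lemma VS_indep:
  fixes v :: "'i::finite \<Rightarrow> real^'d"
  assumes "dim (span (v ` T)) = card T"
  shows "independent (v ` T) \<and> inj_on v T"
proof -
  have "dim (v ` T) \<le> card (v ` T)"
    using dim_le_card[of "v ` T" "v ` T"] span_superset[of "v ` T"] by simp
  moreover have "card (v ` T) \<le> card T" by (rule card_image_le) simp
  ultimately have c1: "card (v ` T) = card T" and c2: "card (v ` T) = dim (v ` T)"
    using assms by simp_all
  have "inj_on v T" using c1 by (simp add: eq_card_imp_inj_on)
  moreover have "independent (v ` T)"
    using card_eq_dim[of "v ` T" "v ` T"] c2 span_superset[of "v ` T"] by simp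
  ultimately show ?thesis by simp
qed

lemma Lev_base:
  fixes u v :: "'i::finite \<Rightarrow> real^'d"
  assumes KH: "KH u k" and k2: "2 \<le> k"
    and H: "\<And>T. card T = k - 1 \<Longrightarrow> card {j. v j \<in> span (v ` T)} \<le> card {i. u i \<in> span (v ` T)}"
  shows "Lev u v (k - 1)"
  unfolding Lev_def
proof (intro allI impI)
  fix T :: "'i set" assume T: "card T = k - 1"
  define A where "A = v ` T"
  have dA: "dim A \<le> k - 1"
    using dim_le_card[of A A] span_superset[of A] card_image_le[of T v] T unfolding A_def by simp
  then have NU: "card {i. u i \<in> span A} \<le> dim A" using NU_bound[OF KH k2] k2 by simp
  have sub: "T \<subseteq> {j. v j \<in> span A}" unfolding A_def by (auto intro: span_base)
  have "card T \<le> card {j. v j \<in> span A}" by (rule card_mono[OF _ sub]) simp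
  then have NV: "k - 1 \<le> card {j. v j \<in> span A}" using T by simp
  have HH: "card {j. v j \<in> span A} \<le> card {i. u i \<in> span A}" using H[OF T] unfolding A_def .
  have e1: "dim (span A) = k - 1" using dA NU NV HH by simp
  have e2: "card {i. u i \<in> span A} = k - 1" using dA NU NV HH by simp
  have "card {j. v j \<in> span A} = card T" using dA NU NV HH T by simp
  then have e3: "{j. v j \<in> span A} = T" using card_subset_eq[OF _ sub] by simp
  show "dim (span (v ` T)) = k - 1 \<and> card {i. u i \<in> span (v ` T)} = k - 1 \<and> {j. v j \<in> span (v ` T)} = T"
    using e1 e2 e3 unfolding A_def by simp
qed

lemma arith_contra:
  fixes a t :: nat
  assumes "1 \<le> a" "2 \<le> t" "(a + 1) * t \<le> a + t"
  shows False
proof -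
  have "a * 2 \<le> a * t" using assms(2) by simp
  moreover have "(a + 1) * t = a * t + t" by simp
  ultimately show False using assms by linarith
qed

lemma Lev_step:
  fixes u v :: "'i::finite \<Rightarrow> real^'d"
  assumes KH: "KH u k" and k2: "2 \<le> k" and kn: "k \<le> CARD('i)"
    and Lm: "Lev u v m" and m2: "2 \<le> m" and mk: "m < k"
  shows "Lev u v (m - 1)"
  unfolding Lev_def
proof (intro allI impI)
  fix T0 :: "'i set" assume T0: "card T0 = m - 1"
  define n where "n = CARD('i)"
  define Out where "Out = - T0"
  define L where "L = (\<lambda>b. span (v ` insert b T0))"
  define P where "P = span (v ` T0)"
  have cO: "card Out = n - (m - 1)"
    unfolding Out_def n_def using card_Diff_subset[of T0 UNIV] T0 by (simp add: Compl_eq_Diff_UNIV)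
  have cO2: "2 \<le> card Out" using cO mk kn m2 unfolding n_def by linarith
  have Lb: "dim (L b) = m \<and> card {i. u i \<in> L b} = m \<and> {j. v j \<in> L b} = insert b T0" if "b \<in> Out" for b
  proof -
    have "card (insert b T0) = m" using that T0 m2 unfolding Out_def by (simp add: card_insert_if)
    then show ?thesis using Lm unfolding Lev_def L_def by blast
  qed
  obtain b0 where b0: "b0 \<in> Out" using cO2 by (metis card.empty ex_in_conv not_numeral_le_zero)
  have PL: "P \<subseteq> L b" for b unfolding P_def L_def by (intro span_mono) auto
  have dP: "dim P = m - 1"
  proof -
    have "card (insert b0 T0) = m" using b0 T0 m2 unfolding Out_def by (simp add: card_insert_if)
    then have "dim (span (v ` insert b0 T0)) = card (insert b0 T0)" using Lb[OF b0] unfolding L_def by simp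
    then have ii: "independent (v ` insert b0 T0) \<and> inj_on v (insert b0 T0)" by (rule VS_indep)
    then have "independent (v ` T0)" by (meson independent_mono image_mono subset_insertI)
    moreover have "card (v ` T0) = card T0" using ii by (meson card_image inj_on_subset subset_insertI)
    moreover have "dim (v ` T0) = card (v ` T0)" by (rule dim_eq_card_independent) fact
    ultimately show ?thesis unfolding P_def using T0 by simp
  qed
  have VP: "{j. v j \<in> P} = T0"
  proof
    show "T0 \<subseteq> {j. v j \<in> P}" unfolding P_def by (auto intro: span_base)
    show "{j. v j \<in> P} \<subseteq> T0"
    proof
      fix j assume j: "j \<in> {j. v j \<in> P}"
      have jb: "j \<in> insert b T0" if "b \<in> Out" for b using j PL[of b] Lb[OF that] by auto
      show "j \<in> T0"
      proof (rule ccontr)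
        assume nj: "j \<notin> T0"
        obtain b1 where b1: "b1 \<in> Out" "b1 \<noteq> j"
        proof -
          have "card (Out - {j}) \<ge> 1" using cO2 by (simp add: card_Diff_singleton_if) linarith
          then obtain b1 where "b1 \<in> Out - {j}" by (metis card.empty ex_in_conv not_one_le_zero)
          then show ?thesis using that by auto
        qed
        show False using jb[OF b1(1)] b1(2) nj by auto
      qed
    qed
  qed
  define Q where "Q = {i. u i \<in> P}"
  have qle: "card Q \<le> m - 1"
    using NU_bound[OF KH k2, of "v ` T0"] dP mk unfolding Q_def P_def by simp
  have qge: "m - 1 \<le> card Q"
  proof (rule ccontr)
    assume "\<not> m - 1 \<le> card Q"
    then have q2: "card Q + 2 \<le> m" by simp
    define Tb where "Tb = (\<lambda>b. {i. u i \<in> L b} - Q)"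
    have cTb: "card (Tb b) = m - card Q" if "b \<in> Out" for b
    proof -
      have "Q \<subseteq> {i. u i \<in> L b}" unfolding Q_def using PL[of b] by auto
      then show ?thesis unfolding Tb_def using Lb[OF that] by (simp add: card_Diff_subset)
    qed
    have disj: "Tb b1 \<inter> Tb b2 = {}" if "b1 \<in> Out" "b2 \<in> Out" "b1 \<noteq> b2" for b1 b2
    proof (rule ccontr)
      assume "Tb b1 \<inter> Tb b2 \<noteq> {}"
      then obtain i where i: "u i \<in> L b1" "u i \<in> L b2" "u i \<notin> P" unfolding Tb_def Q_def by auto
      define M where "M = span (insert (u i) (v ` T0))"
      have dM: "dim M = m"
      proof -
        have "u i \<notin> span (v ` T0)" using i(3) unfolding P_def .
        then have "dim (insert (u i) (v ` T0)) = dim (v ` T0) + 1" by (simp add: dim_insert)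
        moreover have "dim (v ` T0) = m - 1" using dP unfolding P_def by simp
        ultimately show ?thesis unfolding M_def using m2 by simp
      qed
      have MeqL: "M = L b" if "b \<in> Out" "u i \<in> L b" for b
      proof (rule subspace_dim_equal)
        show "subspace M" unfolding M_def by simp
        show "subspace (L b)" unfolding L_def by simp
        have "insert (u i) (v ` T0) \<subseteq> L b" using that(2) PL[of b] unfolding P_def
          by (auto intro: span_base)
        then show "M \<subseteq> L b" unfolding M_def L_def by (simp add: span_minimal)
        show "dim (L b) \<le> dim M" using Lb[OF that(1)] dM by simp
      qed
      have "L b1 = L b2" using MeqL[OF that(1) i(1)] MeqL[OF that(2) i(2)] by simp
      moreover have "v b2 \<in> L b2" unfolding L_def by (auto intro: span_base)
      ultimately have "b2 \<in> {j. v j \<in> L b1}" by simp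
      then have "b2 \<in> insert b1 T0" using Lb[OF that(1)] by simp
      then show False using that unfolding Out_def by auto
    qed
    have "card (\<Union>b\<in>Out. Tb b) = (\<Sum>b\<in>Out. card (Tb b))"
      by (rule card_UN_disjoint) (use disj in auto)
    also have "\<dots> = card Out * (m - card Q)" using cTb by simp
    finally have cU: "card (\<Union>b\<in>Out. Tb b) = card Out * (m - card Q)" .
    have "(\<Union>b\<in>Out. Tb b) \<subseteq> - Q" unfolding Tb_def by auto
    then have "card (\<Union>b\<in>Out. Tb b) \<le> card (- Q)" by (rule card_mono[rotated]) simp
    also have "card (- Q) = n - card Q"
      unfolding n_def using card_Diff_subset[of Q UNIV] by (simp add: Compl_eq_Diff_UNIV)
    finally have ineq: "card Out * (m - card Q) \<le> n - card Q" using cU by simp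
    define a where "a = n - m"
    define t where "t = m - card Q"
    have a1: "1 \<le> a" unfolding a_def n_def using mk kn by simp
    have t2: "2 \<le> t" unfolding t_def using q2 by simp
    have "card Out = a + 1" unfolding a_def using cO mk m2 kn unfolding n_def by simp
    moreover have "n - card Q = a + t" unfolding a_def t_def using q2 mk kn unfolding n_def by simp
    ultimately have "(a + 1) * t \<le> a + t" using ineq unfolding t_def by simp
    then show False using arith_contra a1 t2 by blast
  qed
  show "dim (span (v ` T0)) = m - 1 \<and> card {i. u i \<in> span (v ` T0)} = m - 1 \<and> {j. v j \<in> span (v ` T0)} = T0"
    using dP VP qle qge unfolding P_def Q_def by simp
qed

lemma perm_lemma:
  fixes u v :: "'i::finite \<Rightarrow> real^'d"
  assumes KH: "KH u k" and k2: "2 \<le> k" and kn: "k \<le> CARD('i)"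
    and H: "\<And>T. card T = k - 1 \<Longrightarrow> card {j. v j \<in> span (v ` T)} \<le> card {i. u i \<in> span (v ` T)}"
  shows "\<exists>\<sigma> c. \<sigma> permutes UNIV \<and> (\<forall>j. c j \<noteq> 0 \<and> v j = c j *\<^sub>R u (\<sigma> j))"
proof -
  have levs: "d \<le> k - 2 \<Longrightarrow> Lev u v (k - 1 - d)" for d
  proof (induction d)
    case 0
    then show ?case using Lev_base[OF KH k2 H] by simp
  next
    case (Suc d)
    then have "Lev u v (k - 1 - d)" by simp
    then have "Lev u v (k - 1 - d - 1)"
      using Lev_step[OF KH k2 kn, where m = "k - 1 - d"] Suc.prems by simp
    then show ?case by (simp add: diff_diff_add)
  qed
  have L1: "Lev u v 1" using levs[of "k - 2"] k2 by simp
  have one: "dim (span {v j}) = 1 \<and> card {i. u i \<in> span {v j}} = 1 \<and> {j'. v j' \<in> span {v j}} = {j}" for j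
  proof -
    have "card {j} = 1" by simp
    then have "dim (span (v ` {j})) = 1 \<and> card {i. u i \<in> span (v ` {j})} = 1 \<and> {j'. v j' \<in> span (v ` {j})} = {j}"
      using L1 unfolding Lev_def by blast
    then show ?thesis by simp
  qed
  have "\<forall>j. \<exists>i. {i'. u i' \<in> span {v j}} = {i}"
  proof
    fix j
    have "card {i'. u i' \<in> span {v j}} = Suc 0" using one[of j] by simp
    then show "\<exists>i. {i'. u i' \<in> span {v j}} = {i}" by (simp only: card_1_singleton_iff)
  qed
  then obtain \<sigma> where \<sigma>: "\<And>j. {i'. u i' \<in> span {v j}} = {\<sigma> j}" by metis
  have "\<forall>j. \<exists>c. c \<noteq> 0 \<and> v j = c *\<^sub>R u (\<sigma> j)"
  proof
    fix j
    have "u (\<sigma> j) \<in> span {v j}" using \<sigma>[of j] by auto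
    then obtain t where t: "u (\<sigma> j) = t *\<^sub>R v j" by (auto simp: span_singleton)
    have "u (\<sigma> j) \<noteq> 0" using KH_nonzero[OF KH] k2 by simp
    then have "t \<noteq> 0" using t by auto
    then show "\<exists>c. c \<noteq> 0 \<and> v j = c *\<^sub>R u (\<sigma> j)"
      using t by (intro exI[of _ "inverse t"]) simp
  qed
  then obtain c where c: "\<And>j. c j \<noteq> 0 \<and> v j = c j *\<^sub>R u (\<sigma> j)" by metis
  have "inj \<sigma>"
  proof (rule injI)
    fix j1 j2 assume e: "\<sigma> j1 = \<sigma> j2"
    have "v j2 = (c j2 / c j1) *\<^sub>R v j1" using c[of j1] c[of j2] e by simp
    then have "v j2 \<in> span {v j1}" by (simp add: span_mul span_base)
    then have "j2 \<in> {j'. v j' \<in> span {v j1}}" by simp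
    then show "j1 = j2" using one[of j1] by simp
  qed
  then have "bij \<sigma>" using finite_UNIV_inj_surj[of \<sigma>] by (simp add: bij_def)
  then have "\<sigma> permutes UNIV" by (intro bij_imp_permutes) simp_all
  then show ?thesis using c by blast
qed

lemma polar_aux:
  fixes u v :: "'i::finite \<Rightarrow> real^'d" and a b :: "'i \<Rightarrow> real"
  assumes H: "\<And>x. (\<Sum>i\<in>UNIV. a i * (u i \<bullet> x)^r) = (\<Sum>j\<in>UNIV. b j * (v j \<bullet> x)^r)"
  shows "m \<le> r \<Longrightarrow> (\<Sum>i\<in>UNIV. a i * (\<Prod>l<m. u i \<bullet> X l) * (u i \<bullet> y)^(r-m))
          = (\<Sum>j\<in>UNIV. b j * (\<Prod>l<m. v j \<bullet> X l) * (v j \<bullet> y)^(r-m))"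
proof (induction m arbitrary: X y)
  case 0
  then show ?case using H by simp
next
  case (Suc m)
  have IH: "\<And>X y. (\<Sum>i\<in>UNIV. a i * (\<Prod>l<m. u i \<bullet> X l) * (u i \<bullet> y)^(r-m))
          = (\<Sum>j\<in>UNIV. b j * (\<Prod>l<m. v j \<bullet> X l) * (v j \<bullet> y)^(r-m))"
    using Suc by simp
  define w where "w = X m"
  define gU where "gU = (\<lambda>t. \<Sum>i\<in>UNIV. a i * (\<Prod>l<m. u i \<bullet> X l) * ((u i \<bullet> y) + t * (u i \<bullet> w))^(r-m))"
  define gV where "gV = (\<lambda>t. \<Sum>i\<in>UNIV. b i * (\<Prod>l<m. v i \<bullet> X l) * ((v i \<bullet> y) + t * (v i \<bullet> w))^(r-m))"
  have eq: "gU = gV"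
  proof
    fix t
    show "gU t = gV t"
      using IH[of X "y + t *\<^sub>R w"] unfolding gU_def gV_def
      by (simp add: inner_add_right)
  qed
  have dU: "(gU has_real_derivative (\<Sum>i\<in>UNIV. a i * (\<Prod>l<m. u i \<bullet> X l) * (of_nat (r-m) * (u i \<bullet> y)^(r-m-1) * (u i \<bullet> w)))) (at 0)"
    unfolding gU_def
    by (auto intro!: derivative_eq_intros) (auto intro!: sum.cong simp: ac_simps)
  have dV: "(gV has_real_derivative (\<Sum>i\<in>UNIV. b i * (\<Prod>l<m. v i \<bullet> X l) * (of_nat (r-m) * (v i \<bullet> y)^(r-m-1) * (v i \<bullet> w)))) (at 0)"
    unfolding gV_def
    by (auto intro!: derivative_eq_intros) (auto intro!: sum.cong simp: ac_simps)
  have "(\<Sum>i\<in>UNIV. a i * (\<Prod>l<m. u i \<bullet> X l) * (of_nat (r-m) * (u i \<bullet> y)^(r-m-1) * (u i \<bullet> w)))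
      = (\<Sum>i\<in>UNIV. b i * (\<Prod>l<m. v i \<bullet> X l) * (of_nat (r-m) * (v i \<bullet> y)^(r-m-1) * (v i \<bullet> w)))"
    using DERIV_unique[OF dU] dV eq by simp
  then have "of_nat (r-m) * (\<Sum>i\<in>UNIV. a i * (\<Prod>l<Suc m. u i \<bullet> X l) * (u i \<bullet> y)^(r - Suc m))
      = of_nat (r-m) * (\<Sum>i\<in>UNIV. b i * (\<Prod>l<Suc m. v i \<bullet> X l) * (v i \<bullet> y)^(r - Suc m))"
    unfolding sum_distrib_left w_def
    by (simp add: ac_simps)
  moreover have "(of_nat (r-m)::real) \<noteq> 0" using Suc by simp
  ultimately show ?case by simp
qed

lemma polar:
  fixes u v :: "'i::finite \<Rightarrow> real^'d" and a b :: "'i \<Rightarrow> real"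
  assumes H: "\<And>x. (\<Sum>i\<in>UNIV. a i * (u i \<bullet> x)^r) = (\<Sum>j\<in>UNIV. b j * (v j \<bullet> x)^r)"
  shows "(\<Sum>i\<in>UNIV. a i * (\<Prod>l<r. u i \<bullet> Z l)) = (\<Sum>j\<in>UNIV. b j * (\<Prod>l<r. v j \<bullet> Z l))"
  using polar_aux[OF H, of r Z 0] by simp

definition comb :: "nat \<Rightarrow> (nat \<Rightarrow> 'a) \<Rightarrow> 'a \<Rightarrow> (nat \<Rightarrow> 'a) \<Rightarrow> nat \<Rightarrow> 'a" where
  "comb s X y Y l = (if l < s then X l else if l = s then y else Y (l - Suc s))"

lemma prod_comb:
  fixes g :: "'a \<Rightarrow> real"
  shows "(\<Prod>l<Suc (s + q). g (comb s X y Y l)) = (\<Prod>l<s. g (X l)) * g y * (\<Prod>l<q. g (Y l))"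
proof (induction q)
  case 0
  have "(\<Prod>l<s. g (comb s X y Y l)) = (\<Prod>l<s. g (X l))"
    by (intro prod.cong) (auto simp: comb_def)
  then show ?case by (simp add: comb_def)
next
  case (Suc q)
  have e: "comb s X y Y (Suc (s + q)) = Y q" by (simp add: comb_def)
  have "(\<Prod>l<Suc (s + Suc q). g (comb s X y Y l)) = (\<Prod>l<Suc (s + q). g (comb s X y Y l)) * g (Y q)"
    by (simp only: add_Suc_right prod.lessThan_Suc e)
  also have "\<dots> = (\<Prod>l<s. g (X l)) * g y * (\<Prod>l<q. g (Y l)) * g (Y q)" by (simp only: Suc.IH)
  also have "\<dots> = (\<Prod>l<s. g (X l)) * g y * (\<Prod>l<Suc q. g (Y l))" by (simp only: prod.lessThan_Suc mult.assoc)
  finally show ?case .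
qed

lemma krank_mem:
  fixes A :: "real^'n::finite^'m::finite"
  shows "krank A \<le> CARD('n) \<and> (\<forall>S :: 'n set. card S = krank A \<longrightarrow> cols_indep A S)"
proof -
  let ?K = "{k. k \<le> CARD('n) \<and> (\<forall>S :: 'n set. card S = k \<longrightarrow> cols_indep A S)}"
  have "finite ?K" by (rule finite_subset[of _ "{..CARD('n)}"]) auto
  moreover have "0 \<in> ?K" by (auto simp: cols_indep_def)
  ultimately have "krank A \<in> ?K" unfolding krank_def by (intro Max_in) auto
  then show ?thesis by simp
qed

lemma cols_indep_mono:
  assumes "cols_indep A S'" "S \<subseteq> S'"
  shows "cols_indep A S"
  unfolding cols_indep_def
proof (intro allI impI ballI)
  fix c j assume s: "(\<Sum>j\<in>S. c j *s column j A) = 0" and j: "j \<in> S"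
  define c' where "c' = (\<lambda>j. if j \<in> S then c j else 0)"
  have "(\<Sum>j\<in>S'. c' j *s column j A) = (\<Sum>j\<in>S. c j *s column j A)"
    unfolding c'_def using assms(2)
    by (subst sum.mono_neutral_right[of S' S]) (auto intro!: sum.cong)
  then have "(\<Sum>j\<in>S'. c' j *s column j A) = 0" using s by simp
  then have "c' j = 0" using assms(1) j assms(2) unfolding cols_indep_def by blast
  then show "c j = 0" using j unfolding c'_def by simp
qed

lemma krank_cols:
  fixes A :: "real^'n::finite^'m::finite"
  assumes "k \<le> krank A" "card S \<le> k"
  shows "cols_indep A S"
proof -
  have km: "krank A \<le> CARD('n)" and ci: "\<And>S. card S = krank A \<Longrightarrow> cols_indep A S"
    using krank_mem[of A] by auto
  have "card S \<le> card (UNIV - S) + card S" by simp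
  obtain R where R: "R \<subseteq> UNIV - S" "card R = krank A - card S"
  proof -
    have "krank A - card S \<le> card (UNIV - S)"
      using km card_Diff_subset[of S UNIV] card_mono[of UNIV S] by simp
    then show ?thesis using obtain_subset_with_card_n that by blast
  qed
  have "card (S \<union> R) = krank A"
    using R assms by (subst card_Un_disjoint) auto
  then show ?thesis using cols_indep_mono[OF ci] by blast
qed

lemma KH_of_krank:
  fixes W1 :: "real^'d0::finite^'d1::finite"
  assumes "k \<le> krank (transpose W1)"
  shows "KH (\<lambda>i. W1 $ i) k"
  unfolding KH_def
proof (intro allI impI ballI)
  fix T c j assume T: "card T \<le> k" and s: "(\<Sum>j\<in>T. c j *\<^sub>R W1 $ j) = 0" and j: "j \<in> T"
  have ci: "cols_indep (transpose W1) T" by (rule krank_cols[OF assms T])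
  have "column j (transpose W1) = W1 $ j" for j
    by (simp add: column_def transpose_def vec_eq_iff)
  then have "(\<Sum>j\<in>T. c j *s column j (transpose W1)) = 0" using s by (simp add: scalar_mult_eq_scaleR)
  then show "c j = 0" using ci j unfolding cols_indep_def by blast
qed

lemma col_nonzero_of_krank:
  fixes W2 :: "real^'d1::finite^'d2::finite"
  assumes "1 \<le> krank W2"
  shows "\<exists>k'. W2 $ k' $ i \<noteq> 0"
proof (rule ccontr)
  assume "\<not> ?thesis"
  then have z: "column i W2 = 0" by (simp add: column_def vec_eq_iff)
  have "cols_indep W2 {i}" using krank_cols[OF assms] by simp
  moreover have "(\<Sum>j\<in>{i}. (\<lambda>_. 1::real) j *s column j W2) = 0" using z by simp
  ultimately show False unfolding cols_indep_def by auto
qed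

lemma hpnn2_comp:
  "hpnn2 r W1 W2 x $ k = (\<Sum>i\<in>UNIV. W2 $ k $ i * (W1 $ i \<bullet> x) ^ r)"
  unfolding hpnn2_def rho_def
  by (simp add: matrix_vector_mult_def matrix_vector_mul_component[symmetric])

lemma arith_final:
  fixes n NU NV K k :: nat
  assumes "NU \<le> n" "NV \<le> n" "k - 1 \<le> NV" "2 \<le> k" "2 * n + 2 \<le> 2 * K + k"
    "min (n - NU) K + min (n - NU) K \<le> (n - NU) + (n - NV)"
  shows "NV \<le> NU"
proof (cases "n - NU \<le> K")
  case True
  then show ?thesis using assms by (simp add: min_def)
next
  case False
  then show ?thesis using assms by (simp add: min_def)
qed

lemma H_condition:
  fixes u v :: "'i::finite \<Rightarrow> real^'d" and A B :: "'k::finite \<Rightarrow> 'i \<Rightarrow> real"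
  assumes KH: "KH u k" and k2: "2 \<le> k" and kn: "k \<le> CARD('i)"
    and colnz: "\<And>i. \<exists>k'. A k' i \<noteq> 0"
    and pol: "\<And>k' Z. (\<Sum>i\<in>UNIV. A k' i * (\<Prod>l<r. u i \<bullet> Z l)) = (\<Sum>j\<in>UNIV. B k' j * (\<Prod>l<r. v j \<bullet> Z l))"
    and r: "r = Suc (s + q)" and sq: "s \<le> q"
    and kap: "2 * CARD('i) + 2 \<le> 2 * min CARD('i) (s * (k - 1) + 1) + k"
    and T: "card T = k - 1"
  shows "card {j. v j \<in> span (v ` T)} \<le> card {i. u i \<in> span (v ` T)}"
proof -
  define L where "L = span (v ` T)"
  define n where "n = CARD('i)"
  define kap where "kap = min n (s * (k - 1) + 1)"
  define F where "F = u ` {i. u i \<notin> L} \<union> v ` {j. v j \<notin> L}"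
  have subL: "subspace L" unfolding L_def by (rule subspace_span)
  have finF: "finite F" unfolding F_def by simp
  have FL: "\<forall>w\<in>F. w \<notin> L" unfolding F_def by blast
  obtain y where y: "\<forall>x\<in>L. x \<bullet> y = 0" "\<forall>w\<in>F. w \<bullet> y \<noteq> 0"
    using generic_y[OF subL finF FL] by blast
  define d where "d = (\<lambda>i. u i \<bullet> y)"
  define d' where "d' = (\<lambda>j. v j \<bullet> y)"
  have hd: "d i \<noteq> 0 \<longleftrightarrow> u i \<notin> L" for i
    using y unfolding d_def F_def by auto
  have hd': "d' j \<noteq> 0 \<longleftrightarrow> v j \<notin> L" for j
    using y unfolding d'_def F_def by auto
  define al where "al = (\<lambda>i (X::nat \<Rightarrow> real^'d). \<Prod>l<s. u i \<bullet> X l)"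
  define al' where "al' = (\<lambda>i (X::nat \<Rightarrow> real^'d). \<Prod>l<s. v i \<bullet> X l)"
  define be where "be = (\<lambda>i (Yk :: (nat \<Rightarrow> real^'d) \<times> 'k). A (snd Yk) i * (\<Prod>l<q. u i \<bullet> fst Yk l))"
  define be' where "be' = (\<lambda>i (Yk :: (nat \<Rightarrow> real^'d) \<times> 'k). B (snd Yk) i * (\<Prod>l<q. v i \<bullet> fst Yk l))"
  have eq: "(\<Sum>i\<in>UNIV. d i * al i X * be i Yk) = (\<Sum>i\<in>UNIV. d' i * al' i X * be' i Yk)" for X Yk
  proof -
    obtain Y k' where Yk: "Yk = (Y, k')" by (cases Yk)
    have "(\<Sum>i\<in>UNIV. d i * al i X * be i Yk) = (\<Sum>i\<in>UNIV. A k' i * (\<Prod>l<r. u i \<bullet> comb s X y Y l))"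
      unfolding r prod_comb d_def al_def be_def Yk by (intro sum.cong) (simp_all add: ac_simps)
    also have "\<dots> = (\<Sum>j\<in>UNIV. B k' j * (\<Prod>l<r. v j \<bullet> comb s X y Y l))" by (rule pol)
    also have "\<dots> = (\<Sum>i\<in>UNIV. d' i * al' i X * be' i Yk)"
      unfolding r prod_comb d'_def al'_def be'_def Yk by (intro sum.cong) (simp_all add: ac_simps)
    finally show ?thesis .
  qed
  define Sd where "Sd = {i. d i \<noteq> 0}"
  obtain S0 where S0: "S0 \<subseteq> Sd" "card S0 = min (card Sd) kap"
    using obtain_subset_with_card_n[of "min (card Sd) kap" Sd] by auto
  have cS0: "card S0 \<le> s * (k - 1) + 1" using S0 unfolding kap_def by simp
  have alI: "\<forall>i\<in>S0. c i = 0" if "\<forall>X. (\<Sum>i\<in>S0. c i * al i X) = 0" for c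
    using prod_indep[OF KH k2 cS0] that unfolding al_def by blast
  have beI: "\<forall>i\<in>S0. c i = 0" if h: "\<forall>Yk. (\<Sum>i\<in>S0. c i * be i Yk) = 0" for c
  proof
    fix i assume i: "i \<in> S0"
    have cq: "card S0 \<le> q * (k - 1) + 1"
      using cS0 mult_le_mono1[OF sq, of "k - 1"] by linarith
    have "c i * A k' i = 0" for k'
    proof -
      have "\<forall>Y. (\<Sum>i\<in>S0. (c i * A k' i) * (\<Prod>l<q. u i \<bullet> Y l)) = 0"
      proof
        fix Y
        show "(\<Sum>i\<in>S0. (c i * A k' i) * (\<Prod>l<q. u i \<bullet> Y l)) = 0"
          using h[rule_format, of "(Y, k')"] unfolding be_def by (simp add: ac_simps)
      qed
      then have "\<forall>i\<in>S0. (\<lambda>i. c i * A k' i) i = 0" by (intro prod_indep[OF KH k2 cq]) simp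
      then show ?thesis using i by simp
    qed
    moreover obtain k' where "A k' i \<noteq> 0" using colnz by blast
    ultimately show "c i = 0" by (metis mult_eq_0_iff)
  qed
  have rk: "card S0 + card S0 \<le> card {i. d i \<noteq> 0} + card {i. d' i \<noteq> 0}"
  proof -
    have sub: "S0 \<subseteq> {i. d i \<noteq> 0}" using S0(1) Sd_def by simp
    show ?thesis by (rule rank_ineq[OF eq sub alI sub beI])
  qed
  define NU where "NU = card {i. u i \<in> L}"
  define NV where "NV = card {j. v j \<in> L}"
  have c1: "card {i. d i \<noteq> 0} = n - NU"
  proof -
    have "{i. d i \<noteq> 0} = UNIV - {i. u i \<in> L}" using hd by auto
    then show ?thesis unfolding n_def NU_def by (simp add: card_Diff_subset)
  qed
  have c2: "card {i. d' i \<noteq> 0} = n - NV"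
  proof -
    have "{i. d' i \<noteq> 0} = UNIV - {j. v j \<in> L}" using hd' by auto
    then show ?thesis unfolding n_def NV_def by (simp add: card_Diff_subset)
  qed
  have c3: "k - 1 \<le> NV"
  proof -
    have "T \<subseteq> {j. v j \<in> L}" unfolding L_def by (auto intro: span_base)
    then have "card T \<le> NV" unfolding NV_def by (rule card_mono[rotated]) simp
    then show ?thesis using T by simp
  qed
  have c4: "NV \<le> n" "NU \<le> n" unfolding n_def NU_def NV_def by (simp_all add: card_mono)
  have c5: "card S0 = min (n - NU) kap" using S0(2) c1 unfolding Sd_def by simp
  have c6: "2 * n + 2 \<le> 2 * kap + k" using kap unfolding kap_def n_def by simp
  have "min (n - NU) kap + min (n - NU) kap \<le> (n - NU) + (n - NV)"
    using rk c1 c2 c5 by simp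
  then have "NV \<le> NU" by (rule arith_final[OF c4(2) c4(1) c3 k2 c6])
  then show ?thesis unfolding NU_def NV_def L_def .
qed

lemma sum_ind_left:
  fixes f :: "'a::finite \<Rightarrow> real"
  shows "(\<Sum>t\<in>UNIV. (if t = a then 1 else 0) * f t) = f a"
proof -
  have "(\<Sum>t\<in>UNIV. (if t = a then 1 else 0) * f t) = (\<Sum>t\<in>UNIV. if t = a then f t else 0)"
    by (intro sum.cong) auto
  then show ?thesis by simp
qed

lemma sum_ind_right:
  fixes f :: "'a::finite \<Rightarrow> real"
  shows "(\<Sum>t\<in>UNIV. f t * (if t = a then 1 else 0)) = f a"
proof -
  have "(\<Sum>t\<in>UNIV. f t * (if t = a then 1 else 0)) = (\<Sum>t\<in>UNIV. if t = a then f t else 0)"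
    by (intro sum.cong) auto
  then show ?thesis by simp
qed

lemma sum_diag_right:
  fixes f :: "'a::finite \<Rightarrow> real"
  shows "(\<Sum>t\<in>UNIV. f t * (if t = a then e t else 0)) = f a * e a"
proof -
  have "(\<Sum>t\<in>UNIV. f t * (if t = a then e t else 0)) = (\<Sum>t\<in>UNIV. if t = a then f t * e t else 0)"
    by (intro sum.cong) auto
  then show ?thesis by simp
qed

lemma PD_entry:
  "((\<chi> i j. if j = \<sigma> i then 1 else 0) ** diag_mat d) $ i $ m = (if m = \<sigma> i then d m else (0::real))"
proof -
  have "((\<chi> i j. if j = \<sigma> i then 1 else 0) ** diag_mat d) $ i $ m
      = (\<Sum>t\<in>UNIV. (if t = \<sigma> i then 1 else 0) * (if t = m then d t else 0))"
    unfolding matrix_matrix_mult_def diag_mat_def by simp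
  also have "\<dots> = (if \<sigma> i = m then d (\<sigma> i) else 0)" by (rule sum_ind_left)
  finally show ?thesis by auto
qed

lemma PDW_entry:
  fixes W :: "real^'n^'m::finite"
  shows "(((\<chi> i j. if j = \<sigma> i then 1 else 0) ** diag_mat d) ** W) $ i $ l = d (\<sigma> i) * W $ (\<sigma> i) $ l"
proof -
  have "(((\<chi> i j. if j = \<sigma> i then 1 else 0) ** diag_mat d) ** W) $ i $ l
      = (\<Sum>t\<in>UNIV. (if t = \<sigma> i then d t else 0) * W $ t $ l)"
    unfolding matrix_matrix_mult_def[of "(\<chi> i j. if j = \<sigma> i then 1 else 0) ** diag_mat d" W]
    by (simp add: PD_entry)
  also have "\<dots> = (\<Sum>t\<in>UNIV. if t = \<sigma> i then d t * W $ t $ l else 0)"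
    by (intro sum.cong) auto
  finally show ?thesis by simp
qed

lemma WDP_entry:
  fixes W :: "real^'m::finite^'k"
  shows "((W ** diag_mat e) ** transpose (\<chi> i j. if j = \<sigma> i then 1 else 0)) $ k $ j = W $ k $ (\<sigma> j) * e (\<sigma> j)"
proof -
  have WD: "(W ** diag_mat e) $ k $ m = W $ k $ m * e m" for m
  proof -
    have "(W ** diag_mat e) $ k $ m = (\<Sum>t\<in>UNIV. W $ k $ t * (if t = m then e t else 0))"
      unfolding matrix_matrix_mult_def diag_mat_def by simp
    then show ?thesis by (simp only: sum_diag_right)
  qed
  have "((W ** diag_mat e) ** transpose (\<chi> i j. if j = \<sigma> i then 1 else 0)) $ k $ j
      = (\<Sum>t\<in>UNIV. (W $ k $ t * e t) * (if t = \<sigma> j then 1 else 0))"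
    unfolding matrix_matrix_mult_def[of "W ** diag_mat e"] transpose_def by (simp add: WD)
  also have "\<dots> = W $ k $ (\<sigma> j) * e (\<sigma> j)" by (rule sum_ind_right)
  finally show ?thesis .
qed

theorem mainTheorem15:
  fixes W1 :: "real^'d0^'d1" and W2 :: "real^'d1^'d2" and r1 :: nat
  assumes "CARD('d0) \<ge> 2" and "CARD('d1) \<ge> 2" and "CARD('d2) \<ge> 1"
    and "r1 \<ge> 3"
    and "krank W2 \<ge> 1" and "krank (transpose W1) \<ge> 2"
    and "real r1 \<ge> 2 * of_int \<lceil>(2 * real CARD('d1) - real (krank (transpose W1)))
                               / (2 * real (krank (transpose W1)) - 2)\<rceil> + 1"
  shows "hpnn2_unique r1 W1 W2"
proof -
  note A = assms
  define n where "n = CARD('d1)"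
  define k where "k = krank (transpose W1)"
  have k2: "2 \<le> k" using A(6) unfolding k_def .
  have kn: "k \<le> CARD('d1)" unfolding k_def using krank_mem[of "transpose W1"] by simp
  define u where "u = (\<lambda>i. W1 $ i)"
  have KH: "KH u k" unfolding u_def k_def by (rule KH_of_krank) simp
  have colnz: "\<And>i. \<exists>k'. W2 $ k' $ i \<noteq> 0" using col_nonzero_of_krank[OF A(5)] by blast
  define x where "x = (2 * real n - real k) / (2 * real k - 2)"
  have den: "2 * real k - 2 > 0" using k2 by simp
  have xpos: "x > 0" unfolding x_def using den kn k2 unfolding n_def by (intro divide_pos_pos) auto
  define s where "s = nat \<lceil>x\<rceil>"
  have cpos: "\<lceil>x\<rceil> \<ge> 1" using xpos by (simp add: one_le_ceiling)
  have sx: "real s = of_int \<lceil>x\<rceil>" unfolding s_def using cpos by simp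
  have sge: "real s \<ge> x" using sx le_of_int_ceiling by simp
  have rs: "2 * s + 1 \<le> r1"
  proof -
    have "real r1 \<ge> 2 * real s + 1" using A(7) sx unfolding x_def n_def k_def by simp
    then show ?thesis by linarith
  qed
  have sk: "2 * n \<le> 2 * s * (k - 1) + k"
  proof -
    have "x * (2 * real k - 2) = 2 * real n - real k" unfolding x_def using den by simp
    moreover have "x * (2 * real k - 2) \<le> real s * (2 * real k - 2)"
      using sge den by (intro mult_right_mono) auto
    ultimately have "2 * real n \<le> 2 * real s * (real k - 1) + real k" by (simp add: algebra_simps)
    moreover have k1: "real (k - 1) = real k - 1" using k2 by (simp add: of_nat_diff)
    ultimately have "real (2 * n) \<le> real (2 * s * (k - 1) + k)"
      unfolding of_nat_add of_nat_mult k1 by simp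
    then show ?thesis by (simp only: of_nat_le_iff)
  qed
  define q where "q = r1 - 1 - s"
  have rq: "r1 = Suc (s + q)" and sq: "s \<le> q" unfolding q_def using rs by auto
  have kap: "2 * CARD('d1) + 2 \<le> 2 * min CARD('d1) (s * (k - 1) + 1) + k"
  proof -
    define M where "M = s * (k - 1)"
    have sk': "2 * n \<le> 2 * M + k" using sk unfolding M_def by (simp add: mult.assoc)
    have "2 * n + 2 \<le> 2 * min n (M + 1) + k" using sk' k2 by (simp add: min_def)
    then show ?thesis unfolding M_def n_def .
  qed
  have cardr: "card (UNIV :: 'd1 set) \<le> r1 * (k - 1) + 1"
  proof -
    have "(2 * s + 1) * (k - 1) \<le> r1 * (k - 1)" using rs by (rule mult_le_mono1)
    then show ?thesis using sk k2 unfolding n_def by (simp add: algebra_simps)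
  qed
  show ?thesis
    unfolding hpnn2_unique_def
  proof (intro allI impI)
    fix W1' :: "real^'d0^'d1" and W2' :: "real^'d1^'d2"
    assume eqf: "hpnn2 r1 W1' W2' = hpnn2 r1 W1 W2"
    define v where "v = (\<lambda>j. W1' $ j)"
    have scal: "(\<Sum>i\<in>UNIV. W2 $ k' $ i * (u i \<bullet> z) ^ r1) = (\<Sum>j\<in>UNIV. W2' $ k' $ j * (v j \<bullet> z) ^ r1)" for k' z
      using arg_cong[OF eqf, of "\<lambda>f. f z $ k'"] unfolding hpnn2_comp u_def v_def by simp
    have pol: "(\<Sum>i\<in>UNIV. W2 $ k' $ i * (\<Prod>l<r1. u i \<bullet> Z l)) = (\<Sum>j\<in>UNIV. W2' $ k' $ j * (\<Prod>l<r1. v j \<bullet> Z l))" for k' Z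
      by (rule polar[OF scal])
    have H: "card {j. v j \<in> span (v ` T)} \<le> card {i. u i \<in> span (v ` T)}" if "card T = k - 1" for T
      by (rule H_condition[OF KH k2 kn colnz pol rq sq kap that])
    obtain \<sigma> c where perm: "\<sigma> permutes UNIV" and c: "\<And>j. c j \<noteq> 0 \<and> v j = c j *\<^sub>R u (\<sigma> j)"
      using perm_lemma[OF KH k2 kn H] by blast
    have sinv1: "\<sigma> (inv \<sigma> i) = i" for i using permutes_inverses(1)[OF perm] by simp
    have sinv2: "inv \<sigma> (\<sigma> j) = j" for j using permutes_inverses(2)[OF perm] by simp
    have coef: "W2 $ k' $ (\<sigma> j) = W2' $ k' $ j * c j ^ r1" for k' j
    proof -
      define P where "P = (\<lambda>i Z. \<Prod>l<r1. u i \<bullet> Z l)"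
      define e where "e = (\<lambda>i. W2 $ k' $ i - W2' $ k' $ (inv \<sigma> i) * c (inv \<sigma> i) ^ r1)"
      have "\<forall>Z. (\<Sum>i\<in>UNIV. e i * P i Z) = 0"
      proof
        fix Z
        have vprod: "(\<Prod>l<r1. v j \<bullet> Z l) = c j ^ r1 * P (\<sigma> j) Z" for j
        proof -
          have "(\<Prod>l<r1. v j \<bullet> Z l) = (\<Prod>l<r1. c j * (u (\<sigma> j) \<bullet> Z l))"
            using c[of j] by simp
          also have "\<dots> = c j ^ r1 * P (\<sigma> j) Z" unfolding P_def by (simp add: prod.distrib)
          finally show ?thesis .
        qed
        have "(\<Sum>j\<in>UNIV. W2' $ k' $ j * (\<Prod>l<r1. v j \<bullet> Z l))
            = (\<Sum>j\<in>UNIV. W2' $ k' $ j * c j ^ r1 * P (\<sigma> j) Z)"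
          using vprod by (simp add: mult.assoc)
        also have "\<dots> = (\<Sum>i\<in>UNIV. W2' $ k' $ (inv \<sigma> i) * c (inv \<sigma> i) ^ r1 * P (\<sigma> (inv \<sigma> i)) Z)"
          using sum.permute[OF permutes_inv[OF perm], of "\<lambda>j. W2' $ k' $ j * c j ^ r1 * P (\<sigma> j) Z"]
          by (simp add: comp_def)
        also have "\<dots> = (\<Sum>i\<in>UNIV. W2' $ k' $ (inv \<sigma> i) * c (inv \<sigma> i) ^ r1 * P i Z)"
          by (simp add: sinv1)
        finally have "(\<Sum>i\<in>UNIV. W2 $ k' $ i * P i Z) = (\<Sum>i\<in>UNIV. W2' $ k' $ (inv \<sigma> i) * c (inv \<sigma> i) ^ r1 * P i Z)"
          using pol[of k' Z] unfolding P_def by simp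
        then show "(\<Sum>i\<in>UNIV. e i * P i Z) = 0"
          unfolding e_def by (simp add: left_diff_distrib sum_subtractf)
      qed
      then have "\<forall>i\<in>UNIV. e i = 0" unfolding P_def by (intro prod_indep[OF KH k2 cardr]) simp
      then have "e (\<sigma> j) = 0" by simp
      then show ?thesis unfolding e_def by (simp add: sinv2)
    qed
    define Pm :: "real^'d1^'d1" where "Pm = (\<chi> i j. if j = \<sigma> i then 1 else 0)"
    define d where "d = (\<lambda>i. c (inv \<sigma> i))"
    have ds: "d (\<sigma> j) = c j" for j unfolding d_def by (simp add: sinv2)
    show "hpnn2_equiv r1 W1 W2 W1' W2'"
      unfolding hpnn2_equiv_def
    proof (intro exI conjI)
      show "permutation_matrix Pm" unfolding permutation_matrix_def Pm_def using perm by blast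
      show "\<forall>i. d i \<noteq> 0" unfolding d_def using c by blast
      show "W1' = Pm ** diag_mat d ** W1"
      proof (subst vec_eq_iff, intro allI, subst vec_eq_iff, intro allI)
        fix j l
        have "W1' $ j $ l = c j * W1 $ (\<sigma> j) $ l" using c[of j] unfolding v_def u_def by simp
        then show "W1' $ j $ l = (Pm ** diag_mat d ** W1) $ j $ l"
          unfolding Pm_def by (simp add: PDW_entry ds)
      qed
      show "W2' = W2 ** diag_mat (\<lambda>i. inverse (d i) ^ r1) ** transpose Pm"
      proof (subst vec_eq_iff, intro allI, subst vec_eq_iff, intro allI)
        fix k' j
        have "(W2 ** diag_mat (\<lambda>i. inverse (d i) ^ r1) ** transpose Pm) $ k' $ j
            = W2 $ k' $ (\<sigma> j) * inverse (c j) ^ r1"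
          unfolding Pm_def by (simp add: WDP_entry ds)
        also have "\<dots> = W2' $ k' $ j" using coef[of k' j] c[of j]
          by (simp add: power_inverse[symmetric] field_simps)
        finally show "W2' $ k' $ j = (W2 ** diag_mat (\<lambda>i. inverse (d i) ^ r1) ** transpose Pm) $ k' $ j" by simp
      qed
    qed
  qed
qed

end
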